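(* Let $\mathbf{A}\in\mathbb{R}^{n\times n}$ be symmetric positive semidefinite with $\mathbf{1}^{\intercal}\mathbf{A}=\mathbf{0}^{\intercal}$ and let $\mathbf{x}\in\{-1,1\}^n$. Let $M_0=\frac14\mathbf{x}^{\intercal}\mathbf{A}\mathbf{x}$, let $S_0=\{i:\mathbf{x}_i=1\}$ and $\bar S_0$ its complement, and assume $|S_0|\le n/2$. Let $s,t\in(0,\frac12]$ be such that $|S_0|=sn$ and $tn$ is an integer. Then there exists a set of nodes $T$ with $|T|=tn$ such that the cut $(T,\bar T)$ has value at least $\frac{(1-t)^2-7(1-t)/n+12/n^2}{(1-s)^2+(1-s)/n}M_0$ if $t>s$, and value at least $\frac{t^2-t/n}{s^2-s/n}M_0$ if $t<s$. Furthermore, $T$ can be obtained from $S_0$ by repeatedly moving a single node between the two sides of the cut, where each move (from a side $P$) decreases the current cut value by at most $\frac{2}{|P|}$ times the current cut value.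
   Context: For a set $T\subseteq\{1,\dots,n\}$, the value of the cut $(T,\bar T)$ is $\frac14\mathbf{y}^{\intercal}\mathbf{A}\mathbf{y}$ where $\mathbf{y}_i=1$ for $i\in T$ and $\mathbf{y}_i=-1$ otherwise. $\mathbf{1}$ is the all-ones vector. *)

theory Defs
  imports "HOL-Analysis.Analysis"
begin

definition sign_vec :: "'n::finite set \<Rightarrow> real^'n" where
  "sign_vec T = (\<chi> i. if i \<in> T then 1 else -1)"

definition cut_value :: "real^'n^'n \<Rightarrow> 'n::finite set \<Rightarrow> real" where
  "cut_value A T = (1/4) * (sign_vec T \<bullet> (A *v sign_vec T))"

definition single_move :: "real^'n^'n \<Rightarrow> 'n::finite set \<Rightarrow> 'n set \<Rightarrow> bool" where
  "single_move A T T' \<longleftrightarrow>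
     (\<exists>v. (v \<in> T \<and> T' = T - {v} \<and>
              cut_value A T - cut_value A T' \<le> (2 / real (card T)) * cut_value A T)
         \<or> (v \<notin> T \<and> T' = insert v T \<and>
              cut_value A T - cut_value A T' \<le> (2 / real (card (- T))) * cut_value A T))"

definition move_path :: "real^'n^'n \<Rightarrow> 'n::finite set \<Rightarrow> 'n set \<Rightarrow> bool" where
  "move_path A S T \<longleftrightarrow>
     (\<exists>Ts. Ts \<noteq> [] \<and> hd Ts = S \<and> last Ts = T \<and>
           (\<forall>k. Suc k < length Ts \<longrightarrow> single_move A (Ts ! k) (Ts ! Suc k)))"

end

theory Submission
  imports Defs
begin

lemma card_Compl: "card (- (A::'a::finite set)) = CARD('a) - card A"
  by (simp add: Compl_eq_Diff_UNIV card_Diff_subset)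

lemma cut_nonneg:
  assumes psd: "\<forall>z::real^'n::finite. 0 \<le> z \<bullet> (A *v z)"
  shows "0 \<le> cut_value A (T::'n set)"
  using psd unfolding cut_value_def by simp

lemma cut_compl: "cut_value A (- T) = cut_value A T"
proof -
  have "sign_vec (-T) = (-1) *\<^sub>R sign_vec T" by (simp add: sign_vec_def vec_eq_iff)
  moreover have "A *v ((-1) *\<^sub>R sign_vec T) = (-1) *\<^sub>R (A *v sign_vec T)"
    by (rule matrix_vector_mult_scaleR)
  ultimately show ?thesis unfolding cut_value_def by (simp only:) simp
qed

lemma cut_sum:
  fixes A :: "real^'n::finite^'n"
  assumes symm: "transpose A = A"
    and ones: "\<forall>j. (\<Sum>i\<in>UNIV. A $ i $ j) = 0"
  shows "cut_value A T = (\<Sum>i\<in>T. \<Sum>j\<in>T. A$i$j)"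
proof -
  have sy: "\<And>i j. A$i$j = A$j$i" using symm by (metis transpose_def vec_lambda_beta)
  have rs: "\<And>i. (\<Sum>j\<in>UNIV. A$i$j) = 0" using ones sy by simp
  define a where "a i = (if i \<in> T then 1 else 0::real)" for i
  have y: "\<And>i. sign_vec T $ i = 2 * a i - 1" by (simp add: sign_vec_def a_def)
  have "sign_vec T \<bullet> (A *v sign_vec T) = (\<Sum>i\<in>UNIV. \<Sum>j\<in>UNIV. (2*a i - 1) * A$i$j * (2*a j - 1))"
    by (simp add: inner_vec_def matrix_vector_mult_def sum_distrib_left y mult.assoc)
  also have "\<dots> = (\<Sum>i\<in>UNIV. \<Sum>j\<in>UNIV. 4*(a i*a j*A$i$j) - 2*(a i*A$i$j) - 2*(a j*A$i$j) + A$i$j)"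
    by (simp add: algebra_simps)
  also have "\<dots> = 4*(\<Sum>i\<in>UNIV. \<Sum>j\<in>UNIV. a i*a j*A$i$j) - 2*(\<Sum>i\<in>UNIV. \<Sum>j\<in>UNIV. a i*A$i$j)
       - 2*(\<Sum>i\<in>UNIV. \<Sum>j\<in>UNIV. a j*A$i$j) + (\<Sum>i\<in>UNIV. \<Sum>j\<in>UNIV. A$i$j)"
    by (simp add: sum.distrib sum_subtractf sum_distrib_left)
  also have "(\<Sum>i\<in>UNIV. \<Sum>j\<in>UNIV. a i*A$i$j) = 0"
    by (simp add: sum_distrib_left[symmetric] rs)
  also have "(\<Sum>i\<in>UNIV. \<Sum>j\<in>UNIV. a j*A$i$j) = 0"
    by (subst sum.swap) (simp add: sum_distrib_left[symmetric] ones)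
  also have "(\<Sum>i\<in>UNIV. \<Sum>j\<in>UNIV. A$i$j) = 0" by (simp add: rs)
  also have "(\<Sum>i\<in>UNIV. \<Sum>j\<in>UNIV. a i*a j*A$i$j) = (\<Sum>i\<in>T. \<Sum>j\<in>T. A$i$j)"
  proof -
    have "(\<Sum>i\<in>UNIV. \<Sum>j\<in>UNIV. a i*a j*A$i$j) = (\<Sum>i\<in>UNIV. if i \<in> T then (\<Sum>j\<in>UNIV. if j \<in> T then A$i$j else 0) else 0)"
      by (rule sum.cong) (auto simp: a_def intro!: sum.cong)
    also have "\<dots> = (\<Sum>i\<in>T. \<Sum>j\<in>T. A$i$j)"
      by (simp add: sum.inter_restrict[symmetric])
    finally show ?thesis .
  qed
  finally show ?thesis by (simp add: cut_value_def)
qed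

lemma diag_nonneg:
  fixes A :: "real^'n::finite^'n"
  assumes psd: "\<forall>z::real^'n. 0 \<le> z \<bullet> (A *v z)"
  shows "0 \<le> A$v$v"
proof -
  have "0 \<le> axis v 1 \<bullet> (A *v axis v 1)" using psd by blast
  also have "\<dots> = A$v$v"
    by (simp add: matrix_vector_mult_basis inner_axis' column_def)
  finally show ?thesis .
qed

lemma gsum_remove:
  fixes A :: "real^'n::finite^'n"
  assumes sy: "\<And>i j. A$i$j = A$j$i" and v: "v \<in> T"
  shows "(\<Sum>i\<in>T. \<Sum>j\<in>T. A$i$j) = (\<Sum>i\<in>T-{v}. \<Sum>j\<in>T-{v}. A$i$j) + 2*(\<Sum>j\<in>T. A$v$j) - A$v$v"
proof -
  define T' where "T' = T - {v}"
  have T: "T = insert v T'" "v \<notin> T'" using v by (auto simp: T'_def)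
  have "(\<Sum>i\<in>insert v T'. \<Sum>j\<in>insert v T'. A$i$j)
      = (A$v$v + (\<Sum>j\<in>T'. A$v$j)) + (\<Sum>i\<in>T'. A$i$v) + (\<Sum>i\<in>T'. \<Sum>j\<in>T'. A$i$j)"
    using T(2) by (simp add: sum.insert sum.distrib)
  moreover have "(\<Sum>i\<in>T'. A$i$v) = (\<Sum>j\<in>T'. A$v$j)" using sy by simp
  moreover have "(\<Sum>j\<in>insert v T'. A$v$j) = A$v$v + (\<Sum>j\<in>T'. A$v$j)"
    using T(2) by simp
  moreover have "T' - {v} = T'" using T(2) by simp
  ultimately show ?thesis unfolding T'_def[symmetric] T(1) by simp
qed

lemma exists_remove:
  fixes A :: "real^'n::finite^'n"
  assumes symm: "transpose A = A"
    and psd: "\<forall>z::real^'n. 0 \<le> z \<bullet> (A *v z)"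
    and ones: "\<forall>j. (\<Sum>i\<in>UNIV. A $ i $ j) = 0"
    and ne: "T \<noteq> {}"
  shows "\<exists>v\<in>T. cut_value A T - cut_value A (T - {v}) \<le> 2 / real (card T) * cut_value A T"
proof (rule ccontr)
  assume H: "\<not> ?thesis"
  have sy: "\<And>i j. A$i$j = A$j$i" using symm by (metis transpose_def vec_lambda_beta)
  define g where "g U = (\<Sum>i\<in>U. \<Sum>j\<in>U. A$i$j)" for U
  have cv: "\<And>U. cut_value A U = g U" using cut_sum[OF symm ones] by (simp add: g_def)
  have fin: "finite T" by simp
  have cpos: "0 < real (card T)" using ne fin by (simp add: card_gt_0_iff)
  have "(\<Sum>v\<in>T. 2 / real (card T) * g T) < (\<Sum>v\<in>T. g T - g (T - {v}))"
    using H by (intro sum_strict_mono[OF fin ne]) (auto simp: cv not_le)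
  also have "\<dots> = (\<Sum>v\<in>T. 2*(\<Sum>j\<in>T. A$v$j) - A$v$v)"
    using gsum_remove[OF sy] by (intro sum.cong) (auto simp: g_def)
  also have "\<dots> = 2 * g T - (\<Sum>v\<in>T. A$v$v)"
    by (simp add: sum_subtractf sum_distrib_left g_def)
  also have "\<dots> \<le> 2 * g T"
    using diag_nonneg[OF psd] by (simp add: sum_nonneg)
  finally show False using cpos ne by simp
qed

lemma move_path_refl: "move_path A T T"
  unfolding move_path_def by (rule exI[of _ "[T]"]) simp

lemma move_path_cons:
  assumes "single_move A T T1" and "move_path A T1 T2"
  shows "move_path A T T2"
proof -
  obtain Ts where Ts: "Ts \<noteq> []" "hd Ts = T1" "last Ts = T2"
    "\<forall>k. Suc k < length Ts \<longrightarrow> single_move A (Ts ! k) (Ts ! Suc k)"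
    using assms(2) unfolding move_path_def by blast
  have "\<forall>k. Suc k < length (T # Ts) \<longrightarrow> single_move A ((T # Ts) ! k) ((T # Ts) ! Suc k)"
  proof (intro allI impI)
    fix k assume k: "Suc k < length (T # Ts)"
    show "single_move A ((T # Ts) ! k) ((T # Ts) ! Suc k)"
    proof (cases k)
      case 0
      then show ?thesis using assms(1) Ts(1,2) by (simp add: hd_conv_nth)
    next
      case (Suc k')
      then show ?thesis using Ts(4) k by simp
    qed
  qed
  then show ?thesis unfolding move_path_def using Ts
    by (intro exI[of _ "T # Ts"]) simp
qed

lemma path_gen:
  fixes A :: "real^'n::finite^'n" and \<phi> :: "'n set \<Rightarrow> 'n set"
  assumes step: "\<And>T. \<phi> T \<noteq> {} \<Longrightarrow> \<exists>T'. single_move A T T' \<and> card (\<phi> T') = card (\<phi> T) - 1 \<and>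
      cut_value A T - cut_value A T' \<le> 2 / real (card (\<phi> T)) * cut_value A T"
    and nn: "\<And>T. 0 \<le> cut_value A T"
    and m: "1 \<le> m"
  shows "card (\<phi> T) = m + d \<Longrightarrow> \<exists>T'. card (\<phi> T') = m \<and> move_path A T T' \<and>
     cut_value A T * (real m * (real m - 1)) \<le> cut_value A T' * (real (m+d) * (real (m+d) - 1))"
proof (induction d arbitrary: T)
  case 0
  then show ?case using move_path_refl by auto
next
  case (Suc d)
  then have "\<phi> T \<noteq> {}" using m by auto
  then obtain T1 where T1: "single_move A T T1" "card (\<phi> T1) = card (\<phi> T) - 1"
    "cut_value A T - cut_value A T1 \<le> 2 / real (card (\<phi> T)) * cut_value A T"
    using step by blast
  have c1: "card (\<phi> T1) = m + d" using T1(2) Suc.prems by simp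
  obtain T' where T': "card (\<phi> T') = m" "move_path A T1 T'"
    "cut_value A T1 * (real m * (real m - 1)) \<le> cut_value A T' * (real (m+d) * (real (m+d) - 1))"
    using Suc.IH[OF c1] by blast
  define p where "p = real (m + Suc d)"
  define f0 where "f0 = cut_value A T"
  define f1 where "f1 = cut_value A T1"
  define f2 where "f2 = cut_value A T'"
  define M where "M = real m * (real m - 1)"
  have pd: "real (m + d) = p - 1" by (simp add: p_def)
  have pge: "p \<ge> 2" using m by (simp add: p_def)
  have h1: "f0 - f1 \<le> 2 / p * f0" using T1(3) Suc.prems by (simp add: p_def f0_def f1_def)
  have h1': "(p - 2) * f0 \<le> p * f1"
  proof -
    have "p * (f0 - f1) \<le> p * (2 / p * f0)" using h1 pge by (intro mult_left_mono) auto
    then show ?thesis using pge by (simp add: algebra_simps)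
  qed
  have pp: "real (m+d) * (real (m+d) - 1) = (p - 1) * (p - 2)" using pd by simp
  have h2: "f1 * M \<le> f2 * ((p - 1) * (p - 2))" using T'(3) unfolding pp by (simp add: f1_def f2_def M_def)
  have M0: "0 \<le> M" using m by (simp add: M_def)
  have f2n: "0 \<le> f2" using nn by (simp add: f2_def)
  have goal: "f0 * M \<le> f2 * (p * (p - 1))"
  proof (cases "m = 1")
    case True
    then have "M = 0" by (simp add: M_def)
    then show ?thesis using f2n pge by simp
  next
    case False
    then have pg: "p > 2" using m by (simp add: p_def)
    have "(p - 2) * (f0 * M) \<le> p * f1 * M" using h1' M0 by (simp add: mult.assoc[symmetric] mult_right_mono)
    also have "\<dots> \<le> p * (f2 * ((p - 1) * (p - 2)))" using h2 pge by (simp add: mult.assoc mult_left_mono)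
    also have "\<dots> = (p - 2) * (f2 * (p * (p - 1)))" by (simp add: algebra_simps)
    finally show ?thesis using pg by simp
  qed
  show ?case
    using T' move_path_cons[OF T1(1) T'(2)] goal
    by (intro exI[of _ T']) (simp add: f0_def f2_def M_def p_def)
qed

lemma step_down:
  fixes A :: "real^'n::finite^'n"
  assumes symm: "transpose A = A"
    and psd: "\<forall>z::real^'n. 0 \<le> z \<bullet> (A *v z)"
    and ones: "\<forall>j. (\<Sum>i\<in>UNIV. A $ i $ j) = 0"
    and ne: "T \<noteq> {}"
  shows "\<exists>T'. single_move A T T' \<and> card T' = card T - 1 \<and>
      cut_value A T - cut_value A T' \<le> 2 / real (card T) * cut_value A T"
proof -
  obtain v where v: "v \<in> T" "cut_value A T - cut_value A (T - {v}) \<le> 2 / real (card T) * cut_value A T"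
    using exists_remove[OF symm psd ones ne] by blast
  have "single_move A T (T - {v})" unfolding single_move_def using v by blast
  then show ?thesis using v by (intro exI[of _ "T - {v}"]) simp
qed

lemma step_up:
  fixes A :: "real^'n::finite^'n"
  assumes symm: "transpose A = A"
    and psd: "\<forall>z::real^'n. 0 \<le> z \<bullet> (A *v z)"
    and ones: "\<forall>j. (\<Sum>i\<in>UNIV. A $ i $ j) = 0"
    and ne: "- T \<noteq> {}"
  shows "\<exists>T'. single_move A T T' \<and> card (- T') = card (- T) - 1 \<and>
      cut_value A T - cut_value A T' \<le> 2 / real (card (- T)) * cut_value A T"
proof -
  obtain v where v: "v \<in> - T" "cut_value A (- T) - cut_value A (- T - {v}) \<le> 2 / real (card (- T)) * cut_value A (- T)"
    using exists_remove[OF symm psd ones ne] by blast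
  have e: "- T - {v} = - insert v T" by auto
  have v2: "cut_value A T - cut_value A (insert v T) \<le> 2 / real (card (- T)) * cut_value A T"
    using v(2) unfolding e cut_compl .
  have "single_move A T (insert v T)" unfolding single_move_def using v(1) v2 by blast
  moreover have "card (- insert v T) = card (- T) - 1" using v(1) e[symmetric] by simp
  ultimately show ?thesis using v2 by blast
qed

theorem lemma3p7:
  fixes A :: "real^'n^'n" and x :: "real^'n" and s t :: real
  assumes symm: "transpose A = A"
    and psd: "\<forall>z::real^'n. 0 \<le> z \<bullet> (A *v z)"
    and ones: "\<forall>j. (\<Sum>i\<in>UNIV. A $ i $ j) = 0"
    and xpm: "\<forall>i. x $ i = 1 \<or> x $ i = -1"
    and S0_half: "real (card {i. x $ i = 1}) \<le> real CARD('n) / 2"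
    and s_rng: "0 < s" "s \<le> 1/2"
    and t_rng: "0 < t" "t \<le> 1/2"
    and s_def: "real (card {i. x $ i = 1}) = s * real CARD('n)"
    and t_int: "t * real CARD('n) \<in> \<int>"
  shows "\<exists>T :: 'n set.
           real (card T) = t * real CARD('n) \<and>
           (t > s \<longrightarrow>
              cut_value A T \<ge>
                ((1 - t)^2 - 7 * (1 - t) / real CARD('n) + 12 / (real CARD('n))^2)
                / ((1 - s)^2 + (1 - s) / real CARD('n))
                * ((1/4) * (x \<bullet> (A *v x)))) \<and>
           (t < s \<longrightarrow>
              cut_value A T \<ge>
                (t^2 - t / real CARD('n)) / (s^2 - s / real CARD('n))
                * ((1/4) * (x \<bullet> (A *v x)))) \<and>
           move_path A {i. x $ i = 1} T"
proof -
  define n where "n = CARD('n)"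
  define S0 where "S0 = {i. x $ i = 1}"
  define k where "k = card S0"
  define N where "N = real n"
  have x_eq: "x = sign_vec S0"
    unfolding vec_eq_iff sign_vec_def S0_def using xpm by auto
  have M0: "(1/4) * (x \<bullet> (A *v x)) = cut_value A S0" by (simp add: cut_value_def x_eq)
  have nn: "\<And>T. 0 \<le> cut_value A T" using cut_nonneg[OF psd] .
  have Npos: "N > 0" by (simp add: N_def n_def)
  obtain z where z: "t * N = of_int z" using t_int Ints_cases by (metis N_def n_def)
  have "z > 0" using z Npos t_rng by (metis mult_pos_pos of_int_0_less_iff)
  define m where "m = nat z"
  have mN: "real m = t * N" using z \<open>z > 0\<close> by (simp add: m_def)
  have kN: "real k = s * N" using s_def by (simp add: k_def S0_def N_def n_def)
  have m1: "m \<ge> 1" using mN t_rng Npos by (metis One_nat_def less_one not_less mult_pos_pos of_nat_0 order_less_irrefl)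
  have m2: "2 * real m \<le> N" using mN t_rng Npos by (simp add: mult_right_mono)
  have k1: "k \<ge> 1" using kN s_rng Npos by (metis One_nat_def less_one not_less mult_pos_pos of_nat_0 order_less_irrefl)
  have tN: "t = real m / N" using mN Npos by (simp add: field_simps)
  have sN: "s = real k / N" using kN Npos by (simp add: field_simps)
  have kn: "k \<le> n" by (simp add: k_def n_def card_mono)
  have mn: "m \<le> n" using m2 Npos by (simp add: N_def)
  consider "t < s" | "t = s" | "t > s" by linarith
  then show ?thesis
  proof cases
    case 2
    then have "m = k" using mN kN by simp
    then show ?thesis using 2 move_path_refl mN
      by (intro exI[of _ S0]) (simp add: S0_def k_def N_def n_def)
  next
    case 1
    then have "real m < real k" using mN kN Npos by (simp add: mult_strict_right_mono)
    then have mk: "m < k" by simp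
    have "card S0 = m + (k - m)" using mk by (simp add: k_def)
    from path_gen[of "\<lambda>T. T" A m, OF _ nn m1 this] step_down[OF symm psd ones]
    obtain T where T: "card T = m" "move_path A S0 T"
      "cut_value A S0 * (real m * (real m - 1)) \<le> cut_value A T * (real k * (real k - 1))"
      using mk by auto
    have kk: "real k * (real k - 1) > 0" using mk m1 by simp
    have coef: "(t^2 - t / N) / (s^2 - s / N) = (real m * (real m - 1)) / (real k * (real k - 1))"
    proof -
      have e1: "t^2 - t / N = (real m * (real m - 1)) / N^2" unfolding tN using Npos by (simp add: field_simps power2_eq_square)
      have e2: "s^2 - s / N = (real k * (real k - 1)) / N^2" unfolding sN using Npos by (simp add: field_simps power2_eq_square)
      show ?thesis unfolding e1 e2 using Npos by simp
    qed
    have "(t^2 - t / N) / (s^2 - s / N) * cut_value A S0 \<le> cut_value A T"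
      unfolding coef using T(3) kk by (simp add: field_simps)
    then show ?thesis using T 1 mN M0
      by (intro exI[of _ T]) (simp add: S0_def N_def n_def)
  next
    case 3
    then have "real k < real m" using mN kN Npos by (simp add: mult_strict_right_mono)
    then have mk: "k < m" by simp
    have cc: "card (- S0) = (n - m) + (m - k)" using mk mn by (simp add: card_Compl k_def n_def)
    have nm1: "1 \<le> n - m" using m2 m1 by (simp add: N_def)
    from path_gen[of uminus A "n - m", OF _ nn nm1 cc] step_up[OF symm psd ones]
    obtain T where T: "card (- T) = n - m" "move_path A S0 T"
      "cut_value A S0 * (real (n - m) * (real (n - m) - 1)) \<le> cut_value A T * (real (n - m + (m - k)) * (real (n - m + (m - k)) - 1))"
      by auto
    have cT: "card T = m" using T(1) mn card_Compl[of T] card_mono[of UNIV T] by (simp add: n_def)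
    define a where "a = real (n - m)"
    define b where "b = real (n - k)"
    have ab: "real (n - m + (m - k)) = b" using mk mn by (simp add: b_def)
    have a2: "a \<ge> 2" using m2 mk k1 mn by (simp add: a_def N_def)
    have ba: "b \<ge> a + 1" using mk mn kn by (simp add: a_def b_def)
    have aN: "1 - t = a / N" unfolding tN a_def using mn Npos by (simp add: field_simps N_def)
    have bN: "1 - s = b / N" unfolding sN b_def using kn Npos by (simp add: field_simps N_def)
    have bpos: "b * (b - 1) > 0" "b * (b + 1) > 0" using ba a2 by auto
    have coef: "((1 - t)^2 - 7 * (1 - t) / N + 12 / N^2) / ((1 - s)^2 + (1 - s) / N)
        = (a^2 - 7*a + 12) / (b * (b + 1))"
    proof -
      have e1: "(a / N)^2 - 7 * (a / N) / N + 12 / N^2 = (a^2 - 7*a + 12) / N^2"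
        using Npos by (simp add: field_simps power2_eq_square)
      have e2: "(b / N)^2 + (b / N) / N = (b * (b + 1)) / N^2"
        using Npos by (simp add: field_simps power2_eq_square)
      show ?thesis unfolding aN bN e1 e2 using Npos by simp
    qed
    have c1: "(a^2 - 7*a + 12) / (b * (b + 1)) \<le> (a * (a - 1)) / (b * (b + 1))"
      using a2 bpos by (intro divide_right_mono) (auto simp: power2_eq_square algebra_simps)
    have c2: "(a * (a - 1)) / (b * (b + 1)) \<le> (a * (a - 1)) / (b * (b - 1))"
    proof -
      have "3 * 3 \<le> b * b" using a2 ba by (intro mult_mono) auto
      then show ?thesis using a2 ba bpos by (intro divide_left_mono) (auto simp: algebra_simps)
    qed
    have c3: "(a * (a - 1)) / (b * (b - 1)) * cut_value A S0 \<le> cut_value A T"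
      using T(3) bpos unfolding ab a_def[symmetric] by (simp add: field_simps)
    have "((1 - t)^2 - 7 * (1 - t) / N + 12 / N^2) / ((1 - s)^2 + (1 - s) / N) * cut_value A S0 \<le> cut_value A T"
      unfolding coef using c1 c2 c3 nn[of S0] by (meson order_trans mult_right_mono)
    then show ?thesis using T cT 3 mN M0
      by (intro exI[of _ T]) (simp add: S0_def N_def n_def)
  qed
qed

end
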